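(* Let $A,B\in\mathrm{SL}_2\mathbb{Z}_{\ge0}$ be noncommuting, well oriented, with $\mathrm{tr}(A)<\mathrm{tr}(B)$ and $\mathrm{tr}(AB)=\mathrm{tr}(B^2)$. Let $w$ be a word that is empty or begins with $a$, and let $s\ge0$. Then: (1) $[wab^4(ab^2)^sab^3]<[w(ab^2)^{s+3}]$; (2) $[wab^3(ab^2)^sab^4]<[w(ab^2)^{s+3}]$.
   Context: Words are finite strings over $\{a,b\}$; $\phi$ is the monoid homomorphism with $\phi(a)=A,\phi(b)=B$, and $[w]=\mathrm{tr}(\phi(w))$. Fixed points are for the Möbius action on $\partial\mathcal{H}=\mathbb{P}^1\mathbb{R}$; $\alpha^\pm$ ($\beta^\pm$) are the attracting/repelling fixed points of $A$ ($B$), both equal to the unique fixed point if parabolic. With $\partial\mathcal{H}$ cyclically ordered and $[\alpha,\beta]$ the closed counterclockwise interval from $\alpha$ to $\beta$, let $I^+=\{\alpha^+\}$ if $\alpha^+=\beta^+$, and otherwise the one of $[\alpha^+,\beta^+],[\beta^+,\alpha^+]$ mapped into itself by both $A$ and $B$ (if it exists); define $I^-$ likewise with $A^{-1},B^{-1},\alpha^-,\beta^-$. The pair is coherently oriented if both exist, and well oriented if $A,B$ is coherently oriented but $A,B^{-1}$ is not. *)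

theory Defs
  imports "HOL-Analysis.Analysis"
begin

type_synonym mat2 = "int^2^2"

datatype letter = La | Lb
type_synonym word = "letter list"

fun phi :: "mat2 \<Rightarrow> mat2 \<Rightarrow> word \<Rightarrow> mat2" where
  "phi A B [] = mat 1"
| "phi A B (La # w) = A ** phi A B w"
| "phi A B (Lb # w) = B ** phi A B w"

definition wtr :: "mat2 \<Rightarrow> mat2 \<Rightarrow> word \<Rightarrow> int" where
  "wtr A B w = trace (phi A B w)"

definition SL2_nonneg :: "mat2 \<Rightarrow> bool" where
  "SL2_nonneg M \<longleftrightarrow> det M = 1 \<and> (\<forall>i j. M $ i $ j \<ge> 0)"

definition sl2inv :: "mat2 \<Rightarrow> mat2" where
  "sl2inv M = (\<chi> i j. if i = 1 \<and> j = 1 then M $ 2 $ 2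
                     else if i = 2 \<and> j = 2 then M $ 1 $ 1
                     else - M $ i $ j)"

text \<open>Boundary of the hyperbolic plane: P^1(R) = R \<union> {\<infinity>}.\<close>
datatype pt = Fin real | Inf

fun mob :: "mat2 \<Rightarrow> pt \<Rightarrow> pt" where
  "mob M (Fin x) =
     (let a = of_int (M$1$1); b = of_int (M$1$2); c = of_int (M$2$1); d = of_int (M$2$2)
      in if c * x + d = 0 then Inf else Fin ((a * x + b) / (c * x + d)))"
| "mob M Inf =
     (if M$2$1 = 0 then Inf else Fin (of_int (M$1$1) / of_int (M$2$1)))"

definition fixpt :: "mat2 \<Rightarrow> pt \<Rightarrow> bool" where
  "fixpt M p \<longleftrightarrow> mob M p = p"

text \<open>Eigenvalue of M on the line represented by a fixed point p
  (vector (x,1) for Fin x, vector (1,0) for Inf).\<close>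
fun fev :: "mat2 \<Rightarrow> pt \<Rightarrow> real" where
  "fev M (Fin x) = of_int (M$2$1) * x + of_int (M$2$2)"
| "fev M Inf = of_int (M$1$1)"

text \<open>Attracting fixed point: eigenvalue of largest modulus (derivative
  1/lambda^2 of smallest modulus); repelling: smallest modulus.
  For a parabolic map both are the unique fixed point.\<close>
definition attr :: "mat2 \<Rightarrow> pt" where
  "attr M = (THE p. fixpt M p \<and> (\<forall>q. fixpt M q \<longrightarrow> \<bar>fev M q\<bar> \<le> \<bar>fev M p\<bar>))"

definition repel :: "mat2 \<Rightarrow> pt" where
  "repel M = (THE p. fixpt M p \<and> (\<forall>q. fixpt M q \<longrightarrow> \<bar>fev M p\<bar> \<le> \<bar>fev M q\<bar>))"

text \<open>Closed counterclockwise interval [p,q] on the circle R \<union> {\<infinity>}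
  (positive direction = increasing reals, wrapping through \<infinity>).\<close>
fun ccint :: "pt \<Rightarrow> pt \<Rightarrow> pt set" where
  "ccint (Fin x) (Fin y) =
     (if x \<le> y then Fin ` {x..y} else Fin ` {x..} \<union> {Inf} \<union> Fin ` {..y})"
| "ccint (Fin x) Inf = Fin ` {x..} \<union> {Inf}"
| "ccint Inf (Fin y) = {Inf} \<union> Fin ` {..y}"
| "ccint Inf Inf = {Inf}"

definition inv_interval_exists :: "mat2 \<Rightarrow> mat2 \<Rightarrow> pt \<Rightarrow> pt \<Rightarrow> bool" where
  "inv_interval_exists M N p q \<longleftrightarrow>
     p = q \<or> (\<exists>J \<in> {ccint p q, ccint q p}. mob M ` J \<subseteq> J \<and> mob N ` J \<subseteq> J)"

definition coherently_oriented :: "mat2 \<Rightarrow> mat2 \<Rightarrow> bool" where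
  "coherently_oriented A B \<longleftrightarrow>
     inv_interval_exists A B (attr A) (attr B) \<and>
     inv_interval_exists (sl2inv A) (sl2inv B) (repel A) (repel B)"

definition well_oriented :: "mat2 \<Rightarrow> mat2 \<Rightarrow> bool" where
  "well_oriented A B \<longleftrightarrow> coherently_oriented A B \<and> \<not> coherently_oriented A (sl2inv B)"

end

theory Submission
  imports Defs
begin

type_synonym c4 = "int \<times> int \<times> int \<times> int"

fun lA :: "int \<Rightarrow> c4 \<Rightarrow> c4" where
  "lA x (c0,c1,c2,c3) = (-c1, c0 + x*c1, -c3, c2 + x*c3)"
fun lB :: "int \<Rightarrow> int \<Rightarrow> int \<Rightarrow> c4 \<Rightarrow> c4" where
  "lB x t z (c0,c1,c2,c3) = ((z - x*t)*c1 - c2 - x*c3, t*c1 + c3, c0 + x*c1 + t*c2 + z*c3, -c1)"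
fun red :: "int \<Rightarrow> int \<Rightarrow> int \<Rightarrow> word \<Rightarrow> c4" where
  "red x t z [] = (1,0,0,0)"
| "red x t z (La#w) = lA x (red x t z w)"
| "red x t z (Lb#w) = lB x t z (red x t z w)"

fun tsub :: "c4 \<Rightarrow> c4 \<Rightarrow> c4" where
  "tsub (a0,a1,a2,a3) (b0,b1,b2,b3) = (a0-b0,a1-b1,a2-b2,a3-b3)"

fun good :: "c4 \<Rightarrow> bool" where
  "good (al,be,ga,de) \<longleftrightarrow> 0 \<le> be \<and> 0 < de \<and> 0 < de + ga \<and> 0 < al + de \<and> 0 < al + de + ga"

fun ev :: "mat2 \<Rightarrow> mat2 \<Rightarrow> c4 \<Rightarrow> mat2" where
  "ev A B (c0,c1,c2,c3) = (\<chi> i j. c0 * (if i = j then 1 else 0) + c1 * A$i$j + c2 * B$i$j + c3 * (A**B)$i$j)"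

lemma evA:
  assumes "det A = 1"
  shows "A ** ev A B c = ev A B (lA (trace A) c)"
proof -
  obtain c0 c1 c2 c3 where c: "c = (c0,c1,c2,c3)" by (cases c) auto
  have d: "A$1$1 * A$2$2 - A$1$2 * A$2$1 = 1" using assms by (simp add: det_2)
  show ?thesis unfolding c
    apply (simp add: vec_eq_iff forall_2 matrix_matrix_mult_def sum_2 trace_def)
    using d by algebra
qed

lemma evB:
  assumes "det B = 1"
  shows "B ** ev A B c = ev A B (lB (trace A) (trace B) (trace (A**B)) c)"
proof -
  obtain c0 c1 c2 c3 where c: "c = (c0,c1,c2,c3)" by (cases c) auto
  have d: "B$1$1 * B$2$2 - B$1$2 * B$2$1 = 1" using assms by (simp add: det_2)
  show ?thesis unfolding c
    apply (simp add: vec_eq_iff forall_2 matrix_matrix_mult_def sum_2 trace_def)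
    using d by algebra
qed

lemma phi_red:
  assumes "det A = 1" "det B = 1"
  shows "phi A B w = ev A B (red (trace A) (trace B) (trace (A**B)) w)"
proof (induction w)
  case Nil
  show ?case by (simp add: vec_eq_iff forall_2 mat_def)
next
  case (Cons l w)
  then show ?case by (cases l) (simp_all add: evA evB assms)
qed

lemma ev_sub: "ev A B c - ev A B d = ev A B (tsub c d)"
  by (cases c; cases d) (simp add: vec_eq_iff algebra_simps)

lemma entry_pos:
  fixes a b c e al be ga de :: int
  assumes "0 \<le> a" "0 \<le> b" "1 \<le> c" "b \<le> c" "e = 0 \<or> e = 1"
    "0 \<le> be" "0 < de" "0 < de + ga" "0 < al + de" "0 < al + de + ga"
  shows "0 < al*e + be*a + ga*b + de*c"
proof -
  have ba: "0 \<le> be*a" using assms by simp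
  show ?thesis
  proof (cases "0 \<le> ga")
    case True
    have g: "0 \<le> ga * b" using True assms by simp
    have dc: "de \<le> de * c" using assms by (simp add: mult_le_cancel_left1)
    have "0 < al*e + de" using assms(5,7,9) by auto
    then show ?thesis using g dc ba by linarith
  next
    case False
    have g: "ga * c \<le> ga * b" using False assms by (simp add: mult_le_cancel_left)
    have dc: "de + ga \<le> de * c + ga * c"
      using assms mult_le_cancel_left1[of "de + ga" c] by (simp add: algebra_simps)
    have "0 < al*e + de + ga" using assms(5,8,10) by auto
    then show ?thesis using g dc ba by linarith
  qed
qed

lemma ev_good:
  assumes "good c" "\<forall>i j. 0 \<le> A$i$j" "\<forall>i j. 0 \<le> B$i$j" "\<forall>i j. 1 \<le> (A**B)$i$j"
    "\<forall>i j. B$i$j \<le> (A**B)$i$j"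
  shows "0 < (ev A B c)$i$j"
proof -
  obtain al be ga de where c: "c = (al,be,ga,de)" by (cases c) auto
  have "0 < al*(if i = j then 1 else 0) + be*A$i$j + ga*B$i$j + de*(A**B)$i$j"
    apply (rule entry_pos)
    using assms unfolding c by auto
  then show ?thesis unfolding c by simp
qed


lemma mat_eq2I:
  fixes M N :: mat2
  assumes "M$1$1 = N$1$1" "M$1$2 = N$1$2" "M$2$1 = N$2$1" "M$2$2 = N$2$2"
  shows "M = N"
  using assms by (simp add: vec_eq_iff forall_2)

lemma mm_entries:
  fixes M N :: mat2
  shows "(M**N)$1$1 = M$1$1*N$1$1 + M$1$2*N$2$1"
    "(M**N)$1$2 = M$1$1*N$1$2 + M$1$2*N$2$2"
    "(M**N)$2$1 = M$2$1*N$1$1 + M$2$2*N$2$1"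
    "(M**N)$2$2 = M$2$1*N$1$2 + M$2$2*N$2$2"
  by (simp_all add: matrix_matrix_mult_def sum_2)

lemma det2: "det (M::mat2) = M$1$1*M$2$2 - M$1$2*M$2$1"
  by (simp add: det_2)

lemma tr2: "trace (M::mat2) = M$1$1 + M$2$2"
  by (simp add: trace_def sum_2)

lemma sl_diag:
  assumes "SL2_nonneg M"
  shows "1 \<le> M$1$1" "1 \<le> M$2$2"
proof -
  have d: "M$1$1*M$2$2 - M$1$2*M$2$1 = 1" and nn: "\<forall>i j. 0 \<le> M$i$j"
    using assms by (auto simp: SL2_nonneg_def det2)
  have "0 \<le> M$1$2*M$2$1" using nn by simp
  then have p: "1 \<le> M$1$1*M$2$2" using d by linarith
  have a: "0 \<le> M$1$1" "0 \<le> M$2$2" using nn by auto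
  show "1 \<le> M$1$1"
  proof (rule ccontr)
    assume "\<not> 1 \<le> M$1$1" then have "M$1$1 = 0" using a by linarith
    then show False using p by simp
  qed
  show "1 \<le> M$2$2"
  proof (rule ccontr)
    assume "\<not> 1 \<le> M$2$2" then have "M$2$2 = 0" using a by linarith
    then show False using p by simp
  qed
qed

lemma sl_mult:
  assumes "SL2_nonneg M" "SL2_nonneg N"
  shows "SL2_nonneg (M ** N)"
  using assms unfolding SL2_nonneg_def
  by (auto simp: det_mul mm_entries forall_2)

lemma sl_one: "SL2_nonneg (mat 1)"
  unfolding SL2_nonneg_def by (simp add: det_I) (simp add: mat_def)

lemma phi_sl:
  assumes "SL2_nonneg A" "SL2_nonneg B"
  shows "SL2_nonneg (phi A B w)"
proof (induction w)
  case Nil then show ?case by (simp add: sl_one)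
next
  case (Cons l w) then show ?case by (cases l) (simp_all add: sl_mult assms)
qed

lemma phi_append: "phi A B (u @ v) = phi A B u ** phi A B v"
proof (induction u)
  case Nil then show ?case by simp
next
  case (Cons l u) then show ?case by (cases l) (simp_all add: matrix_mul_assoc)
qed


lemma mat_scal_entry: "(mat c ** (M::mat2))$i$j = c * M$i$j"
proof -
  have "\<forall>i j. (mat c ** (M::mat2))$i$j = c * M$i$j"
    by (simp add: forall_2 matrix_matrix_mult_def sum_2 mat_def)
  then show ?thesis by blast
qed

lemma mat_entries: "(mat c :: mat2)$1$1 = c" "(mat c :: mat2)$1$2 = 0" "(mat c :: mat2)$2$1 = 0" "(mat c :: mat2)$2$2 = c"
  by (simp_all add: mat_def)

lemma ch2:
  assumes "det (M::mat2) = 1"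
  shows "M ** M = mat (trace M) ** M - mat 1"
  using assms
  by (intro mat_eq2I) (simp_all add: mm_entries mat_entries det2 tr2 algebra_simps)

lemma sub_rdistrib: "((M::mat2) - N) ** (R::mat2) = M ** R - N ** R"
  by (intro mat_eq2I) (simp_all add: mm_entries algebra_simps)

lemma lin_sand: "(K1::mat2) ** ((mat c ** (M::mat2) - N) ** (K2::mat2)) = mat c ** (K1 ** (M ** K2)) - K1 ** (N ** K2)"
  by (intro mat_eq2I) (simp_all add: mm_entries mat_entries algebra_simps)

lemma lin_comb: "((mat c ** (M1::mat2) - M2) - (mat c ** N1 - N2)) = mat c ** (M1 - N1) - (M2 - N2)"
  by (intro mat_eq2I) (simp_all add: mat_scal_entry algebra_simps)

lemma seq_mono:
  fixes d :: "nat \<Rightarrow> int"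
  assumes rec: "\<And>s. d (Suc (Suc s)) = tau * d (Suc s) - d s"
    and "d 0 \<le> d 1" "0 < d 0" "2 \<le> tau"
  shows "d 0 \<le> d s \<and> d s \<le> d (Suc s)"
proof (induction s)
  case 0 then show ?case using assms by simp
next
  case (Suc s)
  then have h: "d 0 \<le> d (Suc s)" "d s \<le> d (Suc s)" by auto
  then have "0 \<le> d (Suc s)" using assms by linarith
  then have "2 * d (Suc s) \<le> tau * d (Suc s)" using assms(4) by (simp add: mult_right_mono)
  then show ?case using h rec[of s] by linarith
qed

lemma tr_pos:
  assumes "SL2_nonneg W" "\<forall>i j. 0 < (M1 - M2)$i$j"
  shows "trace (W ** M2) < trace (W ** (M1::mat2))"
proof -
  have nn: "\<forall>i j. 0 \<le> W$i$j" using assms(1) by (simp add: SL2_nonneg_def)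
  have w1: "1 \<le> W$1$1" using sl_diag[OF assms(1)] by simp
  have p: "\<forall>i j. M2$i$j < M1$i$j" using assms(2) by simp
  have "W$1$1 * M2$1$1 < W$1$1 * M1$1$1" using w1 p by simp
  moreover have "W$1$2 * M2$2$1 \<le> W$1$2 * M1$2$1" using nn p by (simp add: mult_left_mono less_imp_le)
  moreover have "W$2$1 * M2$1$2 \<le> W$2$1 * M1$1$2" using nn p by (simp add: mult_left_mono less_imp_le)
  moreover have "W$2$2 * M2$2$2 \<le> W$2$2 * M1$2$2" using nn p by (simp add: mult_left_mono less_imp_le)
  ultimately show ?thesis by (simp add: tr2 mm_entries)
qed

lemma ab_ge1:
  assumes "SL2_nonneg A" "SL2_nonneg B" "A ** B \<noteq> B ** A"
  shows "\<forall>i j. 1 \<le> (A**B)$i$j"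
proof -
  have nA: "\<forall>i j. 0 \<le> A$i$j" and nB: "\<forall>i j. 0 \<le> B$i$j"
    and dA: "A$1$1*A$2$2 - A$1$2*A$2$1 = 1" and dB: "B$1$1*B$2$2 - B$1$2*B$2$1 = 1"
    using assms by (auto simp: SL2_nonneg_def det2)
  note a = sl_diag[OF assms(1)] and b = sl_diag[OF assms(2)]
  have g11: "1 \<le> (A**B)$1$1"
  proof -
    have "1 \<le> A$1$1 * B$1$1" using a b by (metis mult_le_cancel_left1 order.trans zero_less_one_class.zero_le_one linorder_not_le less_le_trans)
    moreover have "0 \<le> A$1$2 * B$2$1" using nA nB by simp
    ultimately show ?thesis by (simp add: mm_entries)
  qed
  have g22: "1 \<le> (A**B)$2$2"
  proof -
    have "1 \<le> A$2$2 * B$2$2" using a b by (metis mult_le_cancel_left1 order.trans zero_less_one_class.zero_le_one linorder_not_le less_le_trans)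
    moreover have "0 \<le> A$2$1 * B$1$2" using nA nB by simp
    ultimately show ?thesis by (simp add: mm_entries)
  qed
  have g12: "1 \<le> (A**B)$1$2"
  proof (rule ccontr)
    assume "\<not> 1 \<le> (A**B)$1$2"
    then have s: "A$1$1*B$1$2 + A$1$2*B$2$2 \<le> 0" by (simp add: mm_entries)
    have "0 \<le> A$1$1*B$1$2" "0 \<le> A$1$2*B$2$2" using nA nB by auto
    then have z1: "A$1$1*B$1$2 = 0" and z2: "A$1$2*B$2$2 = 0" using s by linarith+
    then have "B$1$2 = 0" "A$1$2 = 0" using a b by auto
    moreover have "A$1$1 = 1" "A$2$2 = 1" "B$1$1 = 1" "B$2$2 = 1"
      using dA dB calculation a b by (simp_all add: zmult_eq_1_iff pos_zmult_eq_1_iff)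
    ultimately have "A ** B = B ** A"
      by (intro mat_eq2I) (simp_all add: mm_entries)
    then show False using assms(3) by simp
  qed
  have g21: "1 \<le> (A**B)$2$1"
  proof (rule ccontr)
    assume "\<not> 1 \<le> (A**B)$2$1"
    then have s: "A$2$1*B$1$1 + A$2$2*B$2$1 \<le> 0" by (simp add: mm_entries)
    have "0 \<le> A$2$1*B$1$1" "0 \<le> A$2$2*B$2$1" using nA nB by auto
    then have z1: "A$2$1*B$1$1 = 0" and z2: "A$2$2*B$2$1 = 0" using s by linarith+
    then have "B$2$1 = 0" "A$2$1 = 0" using a b by auto
    moreover have "A$1$1 = 1" "A$2$2 = 1" "B$1$1 = 1" "B$2$2 = 1"
      using dA dB calculation a b by (simp_all add: zmult_eq_1_iff pos_zmult_eq_1_iff)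
    ultimately have "A ** B = B ** A"
      by (intro mat_eq2I) (simp_all add: mm_entries)
    then show False using assms(3) by simp
  qed
  show ?thesis using g11 g12 g21 g22 by (simp add: forall_2)
qed

lemma ab_geB:
  assumes "SL2_nonneg A" "SL2_nonneg B"
  shows "\<forall>i j. B$i$j \<le> (A**B)$i$j"
proof -
  have nA: "\<forall>i j. 0 \<le> A$i$j" and nB: "\<forall>i j. 0 \<le> B$i$j"
    using assms by (auto simp: SL2_nonneg_def)
  note a = sl_diag[OF assms(1)]
  have "B$1$1 \<le> A$1$1 * B$1$1" "B$1$2 \<le> A$1$1 * B$1$2" "B$2$1 \<le> A$2$2 * B$2$1" "B$2$2 \<le> A$2$2 * B$2$2"
    using mult_right_mono[OF a(1), of "B$1$1"] mult_right_mono[OF a(1), of "B$1$2"]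
      mult_right_mono[OF a(2), of "B$2$1"] mult_right_mono[OF a(2), of "B$2$2"] nB by auto
  moreover have "0 \<le> A$1$2 * B$2$1" "0 \<le> A$1$2 * B$2$2" "0 \<le> A$2$1 * B$1$1" "0 \<le> A$2$1 * B$1$2"
    using nA nB by auto
  ultimately show ?thesis by (simp add: forall_2 mm_entries)
qed

lemma red_Y0: "red x t z [La, Lb, Lb, La, Lb, Lb, La, Lb, Lb] = ((- t*z + x), (1 - t*t*z*z + 2*x*t*z - x*x), 0, (- t + t*t*t*z*z - 2*x*t*t*z + x*x*t))"
  by (simp add: algebra_simps)

lemma red_Y1: "red x t z [La, Lb, Lb, La, Lb, Lb, La, Lb, Lb, La, Lb, Lb] = ((1 - t*t*z*z + 2*x*t*z - x*x), (2*t*z - t*t*t*z*z*z - 2*x + 3*x*t*t*z*z - 3*x*x*t*z + x*x*x), 0, (- 2*t*t*z + t*t*t*t*z*z*z + 2*x*t - 3*x*t*t*t*z*z + 3*x*x*t*t*z - x*x*x*t))"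
  by (simp add: algebra_simps)

lemma red_X0: "red x t z [La, Lb, Lb, Lb, Lb, La, Lb, Lb, Lb] = ((- t), (2*t*t*z - t*t*t*t*z - x*t + x*t*t*t), (1), (2*t*z - 3*t*t*t*z + t*t*t*t*t*z - x + 2*x*t*t - x*t*t*t*t))"
  by (simp add: algebra_simps)

lemma red_X1: "red x t z [La, Lb, Lb, Lb, Lb, La, Lb, Lb, La, Lb, Lb, Lb] = ((- t*t*z + x*t), (- 2*t + t*t*t + 2*t*t*t*z*z - t*t*t*t*t*z*z - 3*x*t*t*z + 2*x*t*t*t*t*z + x*x*t - x*x*t*t*t), (t*z - x), (- 1 + 3*t*t + 2*t*t*z*z - t*t*t*t - 3*t*t*t*t*z*z + t*t*t*t*t*t*z*z - 3*x*t*z + 5*x*t*t*t*z - 2*x*t*t*t*t*t*z + x*x - 2*x*x*t*t + x*x*t*t*t*t))"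
  by (simp add: algebra_simps)

lemma red_Z0: "red x t z [La, Lb, Lb, Lb, La, Lb, Lb, Lb, Lb] = (0, (- z + 2*t*t*z - t*t*t*t*z - x*t + x*t*t*t), (- 1), (2*t*z - 3*t*t*t*z + t*t*t*t*t*z + 2*x*t*t - x*t*t*t*t))"
  by (simp add: algebra_simps)

lemma red_Z1: "red x t z [La, Lb, Lb, Lb, La, Lb, Lb, La, Lb, Lb, Lb, Lb] = (0, (- 2*t - t*z*z + t*t*t + 2*t*t*t*z*z - t*t*t*t*t*z*z + x*z - 3*x*t*t*z + 2*x*t*t*t*t*z + x*x*t - x*x*t*t*t), (- t*z + x), (- 1 + 3*t*t + 2*t*t*z*z - t*t*t*t - 3*t*t*t*t*z*z + t*t*t*t*t*t*z*z - 2*x*t*z + 5*x*t*t*t*z - 2*x*t*t*t*t*t*z - 2*x*x*t*t + x*x*t*t*t*t))"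
  by (simp add: algebra_simps)

lemma cond_D0a_be: assumes "x = int p + 2" "t = int p + int q + 3"
  shows "0 < (1 - 3*x*t + x*t*t*t - x*x)"
proof -
  have e: "(1 - 3*x*t + x*t*t*t - x*x) = int (33 + 48*q + 18*q*q + 2*q*q*q + 62*p + 60*p*q + 15*p*q*q + p*q*q*q + 41*p*p + 24*p*p*q + 3*p*p*q*q + 11*p*p*p + 3*p*p*p*q + p*p*p*p)"
    unfolding assms by (simp add: algebra_simps)
  show ?thesis unfolding e of_nat_0_less_iff by simp
qed

lemma cond_D0a_de: assumes "x = int p + 2" "t = int p + int q + 3"
  shows "0 < (3*t - 4*t*t*t + t*t*t*t*t + x + 2*x*t*t - x*t*t*t*t + x*x*t)"
proof -
  have e: "(3*t - 4*t*t*t + t*t*t*t*t + x + 2*x*t*t - x*t*t*t*t + x*x*t) = int (32 + 112*q + 130*q*q + 62*q*q*q + 13*q*q*q*q + q*q*q*q*q + 62*p + 168*p*q + 134*p*q*q + 40*p*q*q*q + 4*p*q*q*q*q + 41*p*p + 83*p*p*q + 42*p*p*q*q + 6*p*p*q*q*q + 11*p*p*p + 16*p*p*p*q + 4*p*p*p*q*q + p*p*p*p + p*p*p*p*q)"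
    unfolding assms by (simp add: algebra_simps)
  show ?thesis unfolding e of_nat_0_less_iff by simp
qed

lemma cond_D0a_dg: assumes "x = int p + 2" "t = int p + int q + 3"
  shows "0 < (3*t - 4*t*t*t + t*t*t*t*t + x + 2*x*t*t - x*t*t*t*t + x*x*t) + (- 1)"
proof -
  have e: "(3*t - 4*t*t*t + t*t*t*t*t + x + 2*x*t*t - x*t*t*t*t + x*x*t) + (- 1) = int (31 + 112*q + 130*q*q + 62*q*q*q + 13*q*q*q*q + q*q*q*q*q + 62*p + 168*p*q + 134*p*q*q + 40*p*q*q*q + 4*p*q*q*q*q + 41*p*p + 83*p*p*q + 42*p*p*q*q + 6*p*p*q*q*q + 11*p*p*p + 16*p*p*p*q + 4*p*p*p*q*q + p*p*p*p + p*p*p*p*q)"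
    unfolding assms by (simp add: algebra_simps)
  show ?thesis unfolding e of_nat_0_less_iff by simp
qed

lemma cond_D0a_ad: assumes "x = int p + 2" "t = int p + int q + 3"
  shows "0 < (3*t - t*t*t + x) + (3*t - 4*t*t*t + t*t*t*t*t + x + 2*x*t*t - x*t*t*t*t + x*x*t)"
proof -
  have e: "(3*t - t*t*t + x) + (3*t - 4*t*t*t + t*t*t*t*t + x + 2*x*t*t - x*t*t*t*t + x*x*t) = int (16 + 88*q + 121*q*q + 61*q*q*q + 13*q*q*q*q + q*q*q*q*q + 39*p + 150*p*q + 131*p*q*q + 40*p*q*q*q + 4*p*q*q*q*q + 32*p*p + 80*p*p*q + 42*p*p*q*q + 6*p*p*q*q*q + 10*p*p*p + 16*p*p*p*q + 4*p*p*p*q*q + p*p*p*p + p*p*p*p*q)"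
    unfolding assms by (simp add: algebra_simps)
  show ?thesis unfolding e of_nat_0_less_iff by simp
qed

lemma cond_D0a_adg: assumes "x = int p + 2" "t = int p + int q + 3"
  shows "0 < (3*t - t*t*t + x) + (3*t - 4*t*t*t + t*t*t*t*t + x + 2*x*t*t - x*t*t*t*t + x*x*t) + (- 1)"
proof -
  have e: "(3*t - t*t*t + x) + (3*t - 4*t*t*t + t*t*t*t*t + x + 2*x*t*t - x*t*t*t*t + x*x*t) + (- 1) = int (15 + 88*q + 121*q*q + 61*q*q*q + 13*q*q*q*q + q*q*q*q*q + 39*p + 150*p*q + 131*p*q*q + 40*p*q*q*q + 4*p*q*q*q*q + 32*p*p + 80*p*p*q + 42*p*p*q*q + 6*p*p*q*q*q + 10*p*p*p + 16*p*p*p*q + 4*p*p*p*q*q + p*p*p*p + p*p*p*p*q)"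
    unfolding assms by (simp add: algebra_simps)
  show ?thesis unfolding e of_nat_0_less_iff by simp
qed

lemma cond_Ea_be: assumes "x = int p + 2" "t = int p + int q + 3"
  shows "0 < (- 1 - 2*t + t*t*t - 2*x + 3*x*t + 6*x*t*t - x*t*t*t - 5*x*t*t*t*t + x*t*t*t*t*t*t + x*x + 5*x*x*t - 2*x*x*t*t*t + x*x*x)"
proof -
  have e: "(- 1 - 2*t + t*t*t - 2*x + 3*x*t + 6*x*t*t - x*t*t*t - 5*x*t*t*t*t + x*t*t*t*t*t*t + x*x + 5*x*x*t - 2*x*x*t*t*t + x*x*x) = int (592 + 1689*q + 1821*q*q + 951*q*q*q + 260*q*q*q*q + 36*q*q*q*q*q + 2*q*q*q*q*q*q + 1907*p + 4376*p*q + 3723*p*q*q + 1511*p*q*q*q + 310*p*q*q*q*q + 30*p*q*q*q*q*q + p*q*q*q*q*q*q + 2523*p*p + 4544*p*p*q + 2955*p*p*q*q + 878*p*p*q*q*q + 120*p*p*q*q*q*q + 6*p*p*q*q*q*q*q + 1773*p*p*p + 2417*p*p*p*q + 1134*p*p*p*q*q + 220*p*p*p*q*q*q + 15*p*p*p*q*q*q*q + 713*p*p*p*p + 694*p*p*p*p*q + 210*p*p*p*p*q*q + 20*p*p*p*p*q*q*q + 164*p*p*p*p*p + 102*p*p*p*p*p*q + 15*p*p*p*p*p*q*q + 20*p*p*p*p*p*p + 6*p*p*p*p*p*p*q + p*p*p*p*p*p*p)"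
    unfolding assms by (simp add: algebra_simps)
  show ?thesis unfolding e of_nat_0_less_iff by simp
qed

lemma cond_Ea_de: assumes "x = int p + 2" "t = int p + int q + 3"
  shows "0 < (1 - 3*t - 7*t*t + 4*t*t*t + 11*t*t*t*t - t*t*t*t*t - 6*t*t*t*t*t*t + t*t*t*t*t*t*t*t - x - 4*x*t - 2*x*t*t + x*t*t*t + x*t*t*t*t + 3*x*t*t*t*t*t - x*t*t*t*t*t*t*t - x*x - x*x*t - 4*x*x*t*t + 2*x*x*t*t*t*t - x*x*x*t)"
proof -
  have e: "(1 - 3*t - 7*t*t + 4*t*t*t + 11*t*t*t*t - t*t*t*t*t - 6*t*t*t*t*t*t + t*t*t*t*t*t*t*t - x - 4*x*t - 2*x*t*t + x*t*t*t + x*t*t*t*t + 3*x*t*t*t*t*t - x*t*t*t*t*t*t*t - x*x - x*x*t - 4*x*x*t*t + 2*x*x*t*t*t*t - x*x*x*t) = int (574 + 2812*q + 5427*q*q + 5406*q*q*q + 3066*q*q*q*q + 1031*q*q*q*q*q + 204*q*q*q*q*q*q + 22*q*q*q*q*q*q*q + q*q*q*q*q*q*q*q + 1883*p + 7837*p*q + 12402*p*q*q + 9808*p*q*q*q + 4264*p*q*q*q*q + 1038*p*q*q*q*q*q + 133*p*q*q*q*q*q*q + 7*p*q*q*q*q*q*q*q + 2514*p*p + 8771*p*p*q + 11132*p*p*q*q + 6770*p*p*q*q*q + 2132*p*p*q*q*q*q + 336*p*p*q*q*q*q*q + 21*p*p*q*q*q*q*q*q + 1772*p*p*p + 5103*p*p*p*q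 + 5036*p*p*p*q*q + 2228*p*p*p*q*q*q + 455*p*p*p*q*q*q*q + 35*p*p*p*q*q*q*q*q + 713*p*p*p*p + 1663*p*p*p*p*q + 1212*p*p*p*p*q*q + 350*p*p*p*p*q*q*q + 35*p*p*p*p*q*q*q*q + 164*p*p*p*p*p + 302*p*p*p*p*p*q + 147*p*p*p*p*p*q*q + 21*p*p*p*p*p*q*q*q + 20*p*p*p*p*p*p + 28*p*p*p*p*p*p*q + 7*p*p*p*p*p*p*q*q + p*p*p*p*p*p*p + p*p*p*p*p*p*p*q)"
    unfolding assms by (simp add: algebra_simps)
  show ?thesis unfolding e of_nat_0_less_iff by simp
qed

lemma cond_Ea_dg: assumes "x = int p + 2" "t = int p + int q + 3"
  shows "0 < (1 - 3*t - 7*t*t + 4*t*t*t + 11*t*t*t*t - t*t*t*t*t - 6*t*t*t*t*t*t + t*t*t*t*t*t*t*t - x - 4*x*t - 2*x*t*t + x*t*t*t + x*t*t*t*t + 3*x*t*t*t*t*t - x*t*t*t*t*t*t*t - x*x - x*x*t - 4*x*x*t*t + 2*x*x*t*t*t*t - x*x*x*t) + (1 + 2*t - t*t*t + x)"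
proof -
  have e: "(1 - 3*t - 7*t*t + 4*t*t*t + 11*t*t*t*t - t*t*t*t*t - 6*t*t*t*t*t*t + t*t*t*t*t*t*t*t - x - 4*x*t - 2*x*t*t + x*t*t*t + x*t*t*t*t + 3*x*t*t*t*t*t - x*t*t*t*t*t*t*t - x*x - x*x*t - 4*x*x*t*t + 2*x*x*t*t*t*t - x*x*x*t) + (1 + 2*t - t*t*t + x) = int (556 + 2787*q + 5418*q*q + 5405*q*q*q + 3066*q*q*q*q + 1031*q*q*q*q*q + 204*q*q*q*q*q*q + 22*q*q*q*q*q*q*q + q*q*q*q*q*q*q*q + 1859*p + 7819*p*q + 12399*p*q*q + 9808*p*q*q*q + 4264*p*q*q*q*q + 1038*p*q*q*q*q*q + 133*p*q*q*q*q*q*q + 7*p*q*q*q*q*q*q*q + 2505*p*p + 8768*p*p*q + 11132*p*p*q*q + 6770*p*p*q*q*q + 2132*p*p*q*q*q*q + 336*p*p*q*q*q*q*q + 21*p*p*q*q*q*q*q*q + 1771*p*p*p + 5103*p*p*p*q + 5036*p*p*p*q*q + 2228*p*p*p*q*q*q + 455*p*p*p*q*q*q*q + 35*p*p*p*q*q*q*q*q + 713*p*p*p*p + 1663*p*p*p*p*q + 1212*p*p*p*p*q*q + 350*p*p*p*p*q*q*q + 35*p*p*p*p*q*q*q*q + 164*p*p*p*p*p + 302*p*p*p*p*p*q + 147*p*p*p*p*p*q*q + 21*p*p*p*p*p*q*q*q + 20*p*p*p*p*p*p + 28*p*p*p*p*p*p*q + 7*p*p*p*p*p*p*q*q + p*p*p*p*p*p*p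 + p*p*p*p*p*p*p*q)"
    unfolding assms by (simp add: algebra_simps)
  show ?thesis unfolding e of_nat_0_less_iff by simp
qed

lemma cond_Ea_ad: assumes "x = int p + 2" "t = int p + int q + 3"
  shows "0 < (1 - 3*t - 6*t*t + t*t*t + 5*t*t*t*t - t*t*t*t*t*t - x - 5*x*t + 2*x*t*t*t - x*x) + (1 - 3*t - 7*t*t + 4*t*t*t + 11*t*t*t*t - t*t*t*t*t - 6*t*t*t*t*t*t + t*t*t*t*t*t*t*t - x - 4*x*t - 2*x*t*t + x*t*t*t + x*t*t*t*t + 3*x*t*t*t*t*t - x*t*t*t*t*t*t*t - x*x - x*x*t - 4*x*x*t*t + 2*x*x*t*t*t*t - x*x*x*t)"
proof -
  have e: "(1 - 3*t - 6*t*t + t*t*t + 5*t*t*t*t - t*t*t*t*t*t - x - 5*x*t + 2*x*t*t*t - x*x) + (1 - 3*t - 7*t*t + 4*t*t*t + 11*t*t*t*t - t*t*t*t*t - 6*t*t*t*t*t*t + t*t*t*t*t*t*t*t - x - 4*x*t - 2*x*t*t + x*t*t*t + x*t*t*t*t + 3*x*t*t*t*t*t - x*t*t*t*t*t*t*t - x*x - x*x*t - 4*x*x*t*t + 2*x*x*t*t*t*t - x*x*x*t) = int (287 + 1980*q + 4521*q*q + 4931*q*q*q + 2936*q*q*q*q + 1013*q*q*q*q*q + 203*q*q*q*q*q*q + 22*q*q*q*q*q*q*q + q*q*q*q*q*q*q*q + 1085*p + 6074*p*q + 10995*p*q*q + 9290*p*q*q*q + 4174*p*q*q*q*q + 1032*p*q*q*q*q*q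 + 133*p*q*q*q*q*q*q + 7*p*q*q*q*q*q*q*q + 1656*p*p + 7382*p*p*q + 10358*p*p*q*q + 6590*p*p*q*q*q + 2117*p*p*q*q*q*q + 336*p*p*q*q*q*q*q + 21*p*p*q*q*q*q*q*q + 1315*p*p*p + 4589*p*p*p*q + 4856*p*p*p*q*q + 2208*p*p*p*q*q*q + 455*p*p*p*q*q*q*q + 35*p*p*p*q*q*q*q*q + 585*p*p*p*p + 1573*p*p*p*p*q + 1197*p*p*p*p*q*q + 350*p*p*p*p*q*q*q + 35*p*p*p*p*q*q*q*q + 146*p*p*p*p*p + 296*p*p*p*p*p*q + 147*p*p*p*p*p*q*q + 21*p*p*p*p*p*q*q*q + 19*p*p*p*p*p*p + 28*p*p*p*p*p*p*q + 7*p*p*p*p*p*p*q*q + p*p*p*p*p*p*p + p*p*p*p*p*p*p*q)"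
    unfolding assms by (simp add: algebra_simps)
  show ?thesis unfolding e of_nat_0_less_iff by simp
qed

lemma cond_Ea_adg: assumes "x = int p + 2" "t = int p + int q + 3"
  shows "0 < (1 - 3*t - 6*t*t + t*t*t + 5*t*t*t*t - t*t*t*t*t*t - x - 5*x*t + 2*x*t*t*t - x*x) + (1 - 3*t - 7*t*t + 4*t*t*t + 11*t*t*t*t - t*t*t*t*t - 6*t*t*t*t*t*t + t*t*t*t*t*t*t*t - x - 4*x*t - 2*x*t*t + x*t*t*t + x*t*t*t*t + 3*x*t*t*t*t*t - x*t*t*t*t*t*t*t - x*x - x*x*t - 4*x*x*t*t + 2*x*x*t*t*t*t - x*x*x*t) + (1 + 2*t - t*t*t + x)"
proof -
  have e: "(1 - 3*t - 6*t*t + t*t*t + 5*t*t*t*t - t*t*t*t*t*t - x - 5*x*t + 2*x*t*t*t - x*x) + (1 - 3*t - 7*t*t + 4*t*t*t + 11*t*t*t*t - t*t*t*t*t - 6*t*t*t*t*t*t + t*t*t*t*t*t*t*t - x - 4*x*t - 2*x*t*t + x*t*t*t + x*t*t*t*t + 3*x*t*t*t*t*t - x*t*t*t*t*t*t*t - x*x - x*x*t - 4*x*x*t*t + 2*x*x*t*t*t*t - x*x*x*t) + (1 + 2*t - t*t*t + x) = int (269 + 1955*q + 4512*q*q + 4930*q*q*q + 2936*q*q*q*q + 1013*q*q*q*q*q + 203*q*q*q*q*q*q + 22*q*q*q*q*q*q*q + q*q*q*q*q*q*q*q + 1061*p + 6056*p*q + 10992*p*q*q + 9290*p*q*q*q +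 4174*p*q*q*q*q + 1032*p*q*q*q*q*q + 133*p*q*q*q*q*q*q + 7*p*q*q*q*q*q*q*q + 1647*p*p + 7379*p*p*q + 10358*p*p*q*q + 6590*p*p*q*q*q + 2117*p*p*q*q*q*q + 336*p*p*q*q*q*q*q + 21*p*p*q*q*q*q*q*q + 1314*p*p*p + 4589*p*p*p*q + 4856*p*p*p*q*q + 2208*p*p*p*q*q*q + 455*p*p*p*q*q*q*q + 35*p*p*p*q*q*q*q*q + 585*p*p*p*p + 1573*p*p*p*p*q + 1197*p*p*p*p*q*q + 350*p*p*p*p*q*q*q + 35*p*p*p*p*q*q*q*q + 146*p*p*p*p*p + 296*p*p*p*p*p*q + 147*p*p*p*p*p*q*q + 21*p*p*p*p*p*q*q*q + 19*p*p*p*p*p*p + 28*p*p*p*p*p*p*q + 7*p*p*p*p*p*p*q*q + p*p*p*p*p*p*p + p*p*p*p*p*p*p*q)"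
    unfolding assms by (simp add: algebra_simps)
  show ?thesis unfolding e of_nat_0_less_iff by simp
qed

lemma cond_D0b_be: assumes "x = int p + 2" "t = int p + int q + 3"
  shows "0 < (- 1 + t*t - 3*x*t + x*t*t*t - x*x)"
proof -
  have e: "(- 1 + t*t - 3*x*t + x*t*t*t - x*x) = int (40 + 54*q + 19*q*q + 2*q*q*q + 68*p + 62*p*q + 15*p*q*q + p*q*q*q + 42*p*p + 24*p*p*q + 3*p*p*q*q + 11*p*p*p + 3*p*p*p*q + p*p*p*p)"
    unfolding assms by (simp add: algebra_simps)
  show ?thesis unfolding e of_nat_0_less_iff by simp
qed

lemma cond_D0b_de: assumes "x = int p + 2" "t = int p + int q + 3"
  shows "0 < (3*t - 4*t*t*t + t*t*t*t*t + 2*x*t*t - x*t*t*t*t + x*x*t)"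
proof -
  have e: "(3*t - 4*t*t*t + t*t*t*t*t + 2*x*t*t - x*t*t*t*t + x*x*t) = int (30 + 112*q + 130*q*q + 62*q*q*q + 13*q*q*q*q + q*q*q*q*q + 61*p + 168*p*q + 134*p*q*q + 40*p*q*q*q + 4*p*q*q*q*q + 41*p*p + 83*p*p*q + 42*p*p*q*q + 6*p*p*q*q*q + 11*p*p*p + 16*p*p*p*q + 4*p*p*p*q*q + p*p*p*p + p*p*p*p*q)"
    unfolding assms by (simp add: algebra_simps)
  show ?thesis unfolding e of_nat_0_less_iff by simp
qed

lemma cond_D0b_dg: assumes "x = int p + 2" "t = int p + int q + 3"
  shows "0 < (3*t - 4*t*t*t + t*t*t*t*t + 2*x*t*t - x*t*t*t*t + x*x*t) + (1)"
proof -
  have e: "(3*t - 4*t*t*t + t*t*t*t*t + 2*x*t*t - x*t*t*t*t + x*x*t) + (1) = int (31 + 112*q + 130*q*q + 62*q*q*q + 13*q*q*q*q + q*q*q*q*q + 61*p + 168*p*q + 134*p*q*q + 40*p*q*q*q + 4*p*q*q*q*q + 41*p*p + 83*p*p*q + 42*p*p*q*q + 6*p*p*q*q*q + 11*p*p*p + 16*p*p*p*q + 4*p*p*p*q*q + p*p*p*p + p*p*p*p*q)"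
    unfolding assms by (simp add: algebra_simps)
  show ?thesis unfolding e of_nat_0_less_iff by simp
qed

lemma cond_D0b_ad: assumes "x = int p + 2" "t = int p + int q + 3"
  shows "0 < (2*t - t*t*t + x) + (3*t - 4*t*t*t + t*t*t*t*t + 2*x*t*t - x*t*t*t*t + x*x*t)"
proof -
  have e: "(2*t - t*t*t + x) + (3*t - 4*t*t*t + t*t*t*t*t + 2*x*t*t - x*t*t*t*t + x*x*t) = int (11 + 87*q + 121*q*q + 61*q*q*q + 13*q*q*q*q + q*q*q*q*q + 37*p + 150*p*q + 131*p*q*q + 40*p*q*q*q + 4*p*q*q*q*q + 32*p*p + 80*p*p*q + 42*p*p*q*q + 6*p*p*q*q*q + 10*p*p*p + 16*p*p*p*q + 4*p*p*p*q*q + p*p*p*p + p*p*p*p*q)"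
    unfolding assms by (simp add: algebra_simps)
  show ?thesis unfolding e of_nat_0_less_iff by simp
qed

lemma cond_D0b_adg: assumes "x = int p + 2" "t = int p + int q + 3"
  shows "0 < (2*t - t*t*t + x) + (3*t - 4*t*t*t + t*t*t*t*t + 2*x*t*t - x*t*t*t*t + x*x*t) + (1)"
proof -
  have e: "(2*t - t*t*t + x) + (3*t - 4*t*t*t + t*t*t*t*t + 2*x*t*t - x*t*t*t*t + x*x*t) + (1) = int (12 + 87*q + 121*q*q + 61*q*q*q + 13*q*q*q*q + q*q*q*q*q + 37*p + 150*p*q + 131*p*q*q + 40*p*q*q*q + 4*p*q*q*q*q + 32*p*p + 80*p*p*q + 42*p*p*q*q + 6*p*p*q*q*q + 10*p*p*p + 16*p*p*p*q + 4*p*p*p*q*q + p*p*p*p + p*p*p*p*q)"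
    unfolding assms by (simp add: algebra_simps)
  show ?thesis unfolding e of_nat_0_less_iff by simp
qed

lemma cond_Eb_be: assumes "x = int p + 2" "t = int p + int q + 3"
  shows "0 < (1 + 2*t - t*t - 3*t*t*t + t*t*t*t*t + 3*x*t + 5*x*t*t - x*t*t*t - 5*x*t*t*t*t + x*t*t*t*t*t*t + x*x + 5*x*x*t - 2*x*x*t*t*t + x*x*x)"
proof -
  have e: "(1 + 2*t - t*t - 3*t*t*t + t*t*t*t*t + 3*x*t + 5*x*t*t - x*t*t*t - 5*x*t*t*t*t + x*t*t*t*t*t*t + x*x + 5*x*x*t - 2*x*x*t*t*t + x*x*x) = int (718 + 1972*q + 2052*q*q + 1037*q*q*q + 275*q*q*q*q + 37*q*q*q*q*q + 2*q*q*q*q*q*q + 2183*p + 4832*p*q + 3980*p*q*q + 1571*p*q*q*q + 315*p*q*q*q*q + 30*p*q*q*q*q*q + p*q*q*q*q*q*q + 2748*p*p + 4800*p*p*q + 3045*p*p*q*q + 888*p*p*q*q*q + 120*p*p*q*q*q*q + 6*p*p*q*q*q*q*q + 1858*p*p*p + 2477*p*p*p*q + 1144*p*p*p*q*q + 220*p*p*p*q*q*q + 15*p*p*p*q*q*q*q + 728*p*p*p*p + 699*p*p*p*p*q + 210*p*p*p*p*q*q + 20*p*p*p*p*q*q*q + 165*p*p*p*p*p + 102*p*p*p*p*p*q + 15*p*p*p*p*p*q*q + 20*p*p*p*p*p*p + 6*p*p*p*p*p*p*q + p*p*p*p*p*p*p)"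
    unfolding assms by (simp add: algebra_simps)
  show ?thesis unfolding e of_nat_0_less_iff by simp
qed

lemma cond_Eb_de: assumes "x = int p + 2" "t = int p + int q + 3"
  shows "0 < (1 - 3*t - 7*t*t + 4*t*t*t + 11*t*t*t*t - t*t*t*t*t - 6*t*t*t*t*t*t + t*t*t*t*t*t*t*t - 2*x*t - 2*x*t*t + x*t*t*t*t + 3*x*t*t*t*t*t - x*t*t*t*t*t*t*t - x*x*t - 4*x*x*t*t + 2*x*x*t*t*t*t - x*x*x*t)"
proof -
  have e: "(1 - 3*t - 7*t*t + 4*t*t*t + 11*t*t*t*t - t*t*t*t*t - 6*t*t*t*t*t*t + t*t*t*t*t*t*t*t - 2*x*t - 2*x*t*t + x*t*t*t*t + 3*x*t*t*t*t*t - x*t*t*t*t*t*t*t - x*x*t - 4*x*x*t*t + 2*x*x*t*t*t*t - x*x*x*t) = int (538 + 2762*q + 5409*q*q + 5404*q*q*q + 3066*q*q*q*q + 1031*q*q*q*q*q + 204*q*q*q*q*q*q + 22*q*q*q*q*q*q*q + q*q*q*q*q*q*q*q + 1817*p + 7776*p*q + 12387*p*q*q + 9807*p*q*q*q + 4264*p*q*q*q*q + 1038*p*q*q*q*q*q + 133*p*q*q*q*q*q*q + 7*p*q*q*q*q*q*q*q + 2472*p*p + 8747*p*p*q + 11129*p*p*q*q + 6770*p*p*q*q*q + 2132*p*p*q*q*q*q + 336*p*p*q*q*q*q*q + 21*p*p*q*q*q*q*q*q + 1761*p*p*p + 5100*p*p*p*q + 5036*p*p*p*q*q + 2228*p*p*p*q*q*q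 + 455*p*p*p*q*q*q*q + 35*p*p*p*q*q*q*q*q + 712*p*p*p*p + 1663*p*p*p*p*q + 1212*p*p*p*p*q*q + 350*p*p*p*p*q*q*q + 35*p*p*p*p*q*q*q*q + 164*p*p*p*p*p + 302*p*p*p*p*p*q + 147*p*p*p*p*p*q*q + 21*p*p*p*p*p*q*q*q + 20*p*p*p*p*p*p + 28*p*p*p*p*p*p*q + 7*p*p*p*p*p*p*q*q + p*p*p*p*p*p*p + p*p*p*p*p*p*p*q)"
    unfolding assms by (simp add: algebra_simps)
  show ?thesis unfolding e of_nat_0_less_iff by simp
qed

lemma cond_Eb_dg: assumes "x = int p + 2" "t = int p + int q + 3"
  shows "0 < (1 - 3*t - 7*t*t + 4*t*t*t + 11*t*t*t*t - t*t*t*t*t - 6*t*t*t*t*t*t + t*t*t*t*t*t*t*t - 2*x*t - 2*x*t*t + x*t*t*t*t + 3*x*t*t*t*t*t - x*t*t*t*t*t*t*t - x*x*t - 4*x*x*t*t + 2*x*x*t*t*t*t - x*x*x*t) + (- 1 - 2*t + t*t*t - x)"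
proof -
  have e: "(1 - 3*t - 7*t*t + 4*t*t*t + 11*t*t*t*t - t*t*t*t*t - 6*t*t*t*t*t*t + t*t*t*t*t*t*t*t - 2*x*t - 2*x*t*t + x*t*t*t*t + 3*x*t*t*t*t*t - x*t*t*t*t*t*t*t - x*x*t - 4*x*x*t*t + 2*x*x*t*t*t*t - x*x*x*t) + (- 1 - 2*t + t*t*t - x) = int (556 + 2787*q + 5418*q*q + 5405*q*q*q + 3066*q*q*q*q + 1031*q*q*q*q*q + 204*q*q*q*q*q*q + 22*q*q*q*q*q*q*q + q*q*q*q*q*q*q*q + 1841*p + 7794*p*q + 12390*p*q*q + 9807*p*q*q*q + 4264*p*q*q*q*q + 1038*p*q*q*q*q*q + 133*p*q*q*q*q*q*q + 7*p*q*q*q*q*q*q*q + 2481*p*p + 8750*p*p*q + 11129*p*p*q*q + 6770*p*p*q*q*q + 2132*p*p*q*q*q*q + 336*p*p*q*q*q*q*q + 21*p*p*q*q*q*q*q*q + 1762*p*p*p + 5100*p*p*p*q + 5036*p*p*p*q*q + 2228*p*p*p*q*q*q + 455*p*p*p*q*q*q*q + 35*p*p*p*q*q*q*q*q + 712*p*p*p*p + 1663*p*p*p*p*q + 1212*p*p*p*p*q*q + 350*p*p*p*p*q*q*q + 35*p*p*p*p*q*q*q*q + 164*p*p*p*p*p + 302*p*p*p*p*p*q + 147*p*p*p*p*p*q*q + 21*p*p*p*p*p*q*q*q + 20*p*p*p*p*p*p + 28*p*p*p*p*p*p*q + 7*p*p*p*p*p*p*q*q + p*p*p*p*p*p*p +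 p*p*p*p*p*p*p*q)"
    unfolding assms by (simp add: algebra_simps)
  show ?thesis unfolding e of_nat_0_less_iff by simp
qed

lemma cond_Eb_ad: assumes "x = int p + 2" "t = int p + int q + 3"
  shows "0 < (1 - 2*t - 4*t*t + t*t*t + 4*t*t*t*t - t*t*t*t*t*t - x - 4*x*t + 2*x*t*t*t - x*x) + (1 - 3*t - 7*t*t + 4*t*t*t + 11*t*t*t*t - t*t*t*t*t - 6*t*t*t*t*t*t + t*t*t*t*t*t*t*t - 2*x*t - 2*x*t*t + x*t*t*t*t + 3*x*t*t*t*t*t - x*t*t*t*t*t*t*t - x*x*t - 4*x*x*t*t + 2*x*x*t*t*t*t - x*x*x*t)"
proof -
  have e: "(1 - 2*t - 4*t*t + t*t*t + 4*t*t*t*t - t*t*t*t*t*t - x - 4*x*t + 2*x*t*t*t - x*x) + (1 - 3*t - 7*t*t + 4*t*t*t + 11*t*t*t*t - t*t*t*t*t - 6*t*t*t*t*t*t + t*t*t*t*t*t*t*t - 2*x*t - 2*x*t*t + x*t*t*t*t + 3*x*t*t*t*t*t - x*t*t*t*t*t*t*t - x*x*t - 4*x*x*t*t + 2*x*x*t*t*t*t - x*x*x*t) = int (197 + 1837*q + 4451*q*q + 4917*q*q*q + 2935*q*q*q*q + 1013*q*q*q*q*q + 203*q*q*q*q*q*q + 22*q*q*q*q*q*q*q + q*q*q*q*q*q*q*q + 929*p + 5910*p*q + 10944*p*q*q + 9285*p*q*q*q + 4174*p*q*q*q*q + 1032*p*q*q*q*q*q + 133*p*q*q*q*q*q*q +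 7*p*q*q*q*q*q*q*q + 1563*p*p + 7322*p*p*q + 10349*p*p*q*q + 6590*p*p*q*q*q + 2117*p*p*q*q*q*q + 336*p*p*q*q*q*q*q + 21*p*p*q*q*q*q*q*q + 1292*p*p*p + 4582*p*p*p*q + 4856*p*p*p*q*q + 2208*p*p*p*q*q*q + 455*p*p*p*q*q*q*q + 35*p*p*p*q*q*q*q*q + 583*p*p*p*p + 1573*p*p*p*p*q + 1197*p*p*p*p*q*q + 350*p*p*p*p*q*q*q + 35*p*p*p*p*q*q*q*q + 146*p*p*p*p*p + 296*p*p*p*p*p*q + 147*p*p*p*p*p*q*q + 21*p*p*p*p*p*q*q*q + 19*p*p*p*p*p*p + 28*p*p*p*p*p*p*q + 7*p*p*p*p*p*p*q*q + p*p*p*p*p*p*p + p*p*p*p*p*p*p*q)"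
    unfolding assms by (simp add: algebra_simps)
  show ?thesis unfolding e of_nat_0_less_iff by simp
qed

lemma cond_Eb_adg: assumes "x = int p + 2" "t = int p + int q + 3"
  shows "0 < (1 - 2*t - 4*t*t + t*t*t + 4*t*t*t*t - t*t*t*t*t*t - x - 4*x*t + 2*x*t*t*t - x*x) + (1 - 3*t - 7*t*t + 4*t*t*t + 11*t*t*t*t - t*t*t*t*t - 6*t*t*t*t*t*t + t*t*t*t*t*t*t*t - 2*x*t - 2*x*t*t + x*t*t*t*t + 3*x*t*t*t*t*t - x*t*t*t*t*t*t*t - x*x*t - 4*x*x*t*t + 2*x*x*t*t*t*t - x*x*x*t) + (- 1 - 2*t + t*t*t - x)"
proof -
  have e: "(1 - 2*t - 4*t*t + t*t*t + 4*t*t*t*t - t*t*t*t*t*t - x - 4*x*t + 2*x*t*t*t - x*x) + (1 - 3*t - 7*t*t + 4*t*t*t + 11*t*t*t*t - t*t*t*t*t - 6*t*t*t*t*t*t + t*t*t*t*t*t*t*t - 2*x*t - 2*x*t*t + x*t*t*t*t + 3*x*t*t*t*t*t - x*t*t*t*t*t*t*t - x*x*t - 4*x*x*t*t + 2*x*x*t*t*t*t - x*x*x*t) + (- 1 - 2*t + t*t*t - x) = int (215 + 1862*q + 4460*q*q + 4918*q*q*q + 2935*q*q*q*q + 1013*q*q*q*q*q + 203*q*q*q*q*q*q + 22*q*q*q*q*q*q*q + q*q*q*q*q*q*q*q + 953*p + 5928*p*q + 10947*p*q*q + 9285*p*q*q*q + 4174*p*q*q*q*q + 1032*p*q*q*q*q*q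 + 133*p*q*q*q*q*q*q + 7*p*q*q*q*q*q*q*q + 1572*p*p + 7325*p*p*q + 10349*p*p*q*q + 6590*p*p*q*q*q + 2117*p*p*q*q*q*q + 336*p*p*q*q*q*q*q + 21*p*p*q*q*q*q*q*q + 1293*p*p*p + 4582*p*p*p*q + 4856*p*p*p*q*q + 2208*p*p*p*q*q*q + 455*p*p*p*q*q*q*q + 35*p*p*p*q*q*q*q*q + 583*p*p*p*p + 1573*p*p*p*p*q + 1197*p*p*p*p*q*q + 350*p*p*p*p*q*q*q + 35*p*p*p*p*q*q*q*q + 146*p*p*p*p*p + 296*p*p*p*p*p*q + 147*p*p*p*p*p*q*q + 21*p*p*p*p*p*q*q*q + 19*p*p*p*p*p*p + 28*p*p*p*p*p*p*q + 7*p*p*p*p*p*p*q*q + p*p*p*p*p*p*p + p*p*p*p*p*p*p*q)"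
    unfolding assms by (simp add: algebra_simps)
  show ?thesis unfolding e of_nat_0_less_iff by simp
qed

lemma good_D0a: assumes "x = int p + 2" "t = int p + int q + 3" "z = t*t - 2"
  shows "good (tsub (red x t z [La, Lb, Lb, La, Lb, Lb, La, Lb, Lb]) (red x t z [La, Lb, Lb, Lb, Lb, La, Lb, Lb, Lb]))"
proof -
  have e: "tsub (red x t z [La, Lb, Lb, La, Lb, Lb, La, Lb, Lb]) (red x t z [La, Lb, Lb, Lb, Lb, La, Lb, Lb, Lb]) = ((3*t - t*t*t + x), (1 - 3*x*t + x*t*t*t - x*x), (- 1), (3*t - 4*t*t*t + t*t*t*t*t + x + 2*x*t*t - x*t*t*t*t + x*x*t))"
    by (simp add: red_Y0 red_X0  assms(3) algebra_simps)
  show ?thesis unfolding e good.simps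
    using cond_D0a_be[OF assms(1,2)] cond_D0a_de[OF assms(1,2)] cond_D0a_dg[OF assms(1,2)] cond_D0a_ad[OF assms(1,2)] cond_D0a_adg[OF assms(1,2)] by (meson less_imp_le)
qed

lemma good_Ea: assumes "x = int p + 2" "t = int p + int q + 3" "z = t*t - 2"
  shows "good (tsub (tsub (red x t z [La, Lb, Lb, La, Lb, Lb, La, Lb, Lb, La, Lb, Lb]) (red x t z [La, Lb, Lb, Lb, Lb, La, Lb, Lb, La, Lb, Lb, Lb])) (tsub (red x t z [La, Lb, Lb, La, Lb, Lb, La, Lb, Lb]) (red x t z [La, Lb, Lb, Lb, Lb, La, Lb, Lb, Lb])))"
proof -
  have e: "tsub (tsub (red x t z [La, Lb, Lb, La, Lb, Lb, La, Lb, Lb, La, Lb, Lb]) (red x t z [La, Lb, Lb, Lb, Lb, La, Lb, Lb, La, Lb, Lb, Lb])) (tsub (red x t z [La, Lb, Lb, La, Lb, Lb, La, Lb, Lb]) (red x t z [La, Lb, Lb, Lb, Lb, La, Lb, Lb, Lb])) = ((1 - 3*t - 6*t*t + t*t*t + 5*t*t*t*t - t*t*t*t*t*t - x - 5*x*t + 2*x*t*t*t - x*x), (- 1 - 2*t + t*t*t - 2*x + 3*x*t + 6*x*t*t - x*t*t*t - 5*x*t*t*t*t + x*t*t*t*t*t*t + x*x + 5*x*x*t - 2*x*x*t*t*t + x*x*x), (1 + 2*t - t*t*t + x), (1 - 3*t - 7*t*t + 4*t*t*t + 11*t*t*t*t - t*t*t*t*t - 6*t*t*t*t*t*t + t*t*t*t*t*t*t*t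 - x - 4*x*t - 2*x*t*t + x*t*t*t + x*t*t*t*t + 3*x*t*t*t*t*t - x*t*t*t*t*t*t*t - x*x - x*x*t - 4*x*x*t*t + 2*x*x*t*t*t*t - x*x*x*t))"
    by (simp add: red_Y1 red_X1 red_Y0 red_X0 assms(3) algebra_simps)
  show ?thesis unfolding e good.simps
    using cond_Ea_be[OF assms(1,2)] cond_Ea_de[OF assms(1,2)] cond_Ea_dg[OF assms(1,2)] cond_Ea_ad[OF assms(1,2)] cond_Ea_adg[OF assms(1,2)] by (meson less_imp_le)
qed

lemma good_D0b: assumes "x = int p + 2" "t = int p + int q + 3" "z = t*t - 2"
  shows "good (tsub (red x t z [La, Lb, Lb, La, Lb, Lb, La, Lb, Lb]) (red x t z [La, Lb, Lb, Lb, La, Lb, Lb, Lb, Lb]))"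
proof -
  have e: "tsub (red x t z [La, Lb, Lb, La, Lb, Lb, La, Lb, Lb]) (red x t z [La, Lb, Lb, Lb, La, Lb, Lb, Lb, Lb]) = ((2*t - t*t*t + x), (- 1 + t*t - 3*x*t + x*t*t*t - x*x), (1), (3*t - 4*t*t*t + t*t*t*t*t + 2*x*t*t - x*t*t*t*t + x*x*t))"
    by (simp add: red_Y0 red_Z0  assms(3) algebra_simps)
  show ?thesis unfolding e good.simps
    using cond_D0b_be[OF assms(1,2)] cond_D0b_de[OF assms(1,2)] cond_D0b_dg[OF assms(1,2)] cond_D0b_ad[OF assms(1,2)] cond_D0b_adg[OF assms(1,2)] by (meson less_imp_le)
qed

lemma good_Eb: assumes "x = int p + 2" "t = int p + int q + 3" "z = t*t - 2"
  shows "good (tsub (tsub (red x t z [La, Lb, Lb, La, Lb, Lb, La, Lb, Lb, La, Lb, Lb]) (red x t z [La, Lb, Lb, Lb, La, Lb, Lb, La, Lb, Lb, Lb, Lb])) (tsub (red x t z [La, Lb, Lb, La, Lb, Lb, La, Lb, Lb]) (red x t z [La, Lb, Lb, Lb, La, Lb, Lb, Lb, Lb])))"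
proof -
  have e: "tsub (tsub (red x t z [La, Lb, Lb, La, Lb, Lb, La, Lb, Lb, La, Lb, Lb]) (red x t z [La, Lb, Lb, Lb, La, Lb, Lb, La, Lb, Lb, Lb, Lb])) (tsub (red x t z [La, Lb, Lb, La, Lb, Lb, La, Lb, Lb]) (red x t z [La, Lb, Lb, Lb, La, Lb, Lb, Lb, Lb])) = ((1 - 2*t - 4*t*t + t*t*t + 4*t*t*t*t - t*t*t*t*t*t - x - 4*x*t + 2*x*t*t*t - x*x), (1 + 2*t - t*t - 3*t*t*t + t*t*t*t*t + 3*x*t + 5*x*t*t - x*t*t*t - 5*x*t*t*t*t + x*t*t*t*t*t*t + x*x + 5*x*x*t - 2*x*x*t*t*t + x*x*x), (- 1 - 2*t + t*t*t - x), (1 - 3*t - 7*t*t + 4*t*t*t + 11*t*t*t*t - t*t*t*t*t - 6*t*t*t*t*t*t + t*t*t*t*t*t*t*t - 2*x*t - 2*x*t*t + x*t*t*t*t + 3*x*t*t*t*t*t - x*t*t*t*t*t*t*t - x*x*t - 4*x*x*t*t + 2*x*x*t*t*t*t - x*x*x*t))"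
    by (simp add: red_Y1 red_Z1 red_Y0 red_Z0 assms(3) algebra_simps)
  show ?thesis unfolding e good.simps
    using cond_Eb_be[OF assms(1,2)] cond_Eb_de[OF assms(1,2)] cond_Eb_dg[OF assms(1,2)] cond_Eb_ad[OF assms(1,2)] cond_Eb_adg[OF assms(1,2)] by (meson less_imp_le)
qed

lemma variant:
  fixes A B :: mat2 and K1w K2w Y0 Y1 X0 X1 :: word
  assumes sA: "SL2_nonneg A" and sB: "SL2_nonneg B" and nc: "A ** B \<noteq> B ** A"
    and g0: "good (tsub (red (trace A) (trace B) (trace (A**B)) Y0) (red (trace A) (trace B) (trace (A**B)) X0))"
    and g1: "good (tsub (tsub (red (trace A) (trace B) (trace (A**B)) Y1) (red (trace A) (trace B) (trace (A**B)) X1))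
                  (tsub (red (trace A) (trace B) (trace (A**B)) Y0) (red (trace A) (trace B) (trace (A**B)) X0)))"
    and eY0: "Y0 = concat (replicate 3 [La,Lb,Lb])" and eY1: "Y1 = concat (replicate 4 [La,Lb,Lb])"
    and eX0: "X0 = K1w @ K2w" and eX1: "X1 = K1w @ [La,Lb,Lb] @ K2w"
  shows "0 < (phi A B (concat (replicate (s+3) [La,Lb,Lb])) -
              phi A B K1w ** (phi A B (concat (replicate s [La,Lb,Lb])) ** phi A B K2w))$i$j"
proof -
  define aw where "aw = [La,Lb,Lb]"
  define Q where "Q s = phi A B (concat (replicate s aw))" for s
  define K1 where "K1 = phi A B K1w"
  define K2 where "K2 = phi A B K2w"
  define D where "D s = Q (s+3) - K1 ** (Q s ** K2)" for s
  define P where "P = phi A B aw"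
  define tau where "tau = trace P"
  have dA: "det A = 1" and dB: "det B = 1" using sA sB by (auto simp: SL2_nonneg_def)
  have sP: "SL2_nonneg P" unfolding P_def using phi_sl[OF sA sB] .
  then have dP: "det P = 1" by (simp add: SL2_nonneg_def)
  have tau2: "2 \<le> tau" unfolding tau_def tr2 using sl_diag[OF sP] by linarith
  have Qsuc: "Q (Suc s) = P ** Q s" for s
    by (simp add: Q_def P_def phi_append)
  have Qrec: "Q (Suc (Suc s)) = mat tau ** Q (Suc s) - Q s" for s
  proof -
    have "Q (Suc (Suc s)) = (P ** P) ** Q s" by (simp add: Qsuc matrix_mul_assoc)
    also have "\<dots> = mat tau ** (P ** Q s) - Q s"
      by (simp add: ch2[OF dP] tau_def sub_rdistrib matrix_mul_assoc)
    finally show ?thesis by (simp add: Qsuc)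
  qed
  have Drec: "D (Suc (Suc s)) = mat tau ** D (Suc s) - D s" for s
  proof -
    have "D (Suc (Suc s)) = (mat tau ** Q (s+4) - Q (s+3)) - (mat tau ** (K1 ** (Q (Suc s) ** K2)) - K1 ** (Q s ** K2))"
      unfolding D_def using Qrec[of "s+3"] Qrec[of s] lin_sand by (simp add: eval_nat_numeral)
    also have "\<dots> = mat tau ** D (Suc s) - D s"
      unfolding D_def lin_comb by (simp add: eval_nat_numeral)
    finally show ?thesis .
  qed
  let ?r = "red (trace A) (trace B) (trace (A**B))"
  have Q0: "Q 0 = mat 1" by (simp add: Q_def)
  have Q1: "Q 1 = phi A B aw" by (simp add: Q_def)
  have D0: "D 0 = ev A B (tsub (?r Y0) (?r X0))"
  proof -
    have "D 0 = phi A B Y0 - phi A B X0"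
      by (simp add: D_def Q_def eY0 eX0 aw_def phi_append K1_def K2_def Q0[unfolded Q_def])
    then show ?thesis by (simp add: phi_red[OF dA dB] ev_sub)
  qed
  have D1: "D 1 = ev A B (tsub (?r Y1) (?r X1))"
  proof -
    have "D 1 = phi A B Y1 - phi A B X1"
      by (simp add: D_def Q_def eY1 eX1 aw_def phi_append K1_def K2_def numeral_eq_Suc matrix_mul_assoc)
    then show ?thesis by (simp add: phi_red[OF dA dB] ev_sub)
  qed
  have nA: "\<forall>i j. 0 \<le> A$i$j" and nB: "\<forall>i j. 0 \<le> B$i$j" using sA sB by (auto simp: SL2_nonneg_def)
  note facts = nA nB ab_ge1[OF sA sB nc] ab_geB[OF sA sB]
  have p0: "0 < (D 0)$i$j" unfolding D0 by (rule ev_good[OF g0 facts])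
  have p1: "0 < (D 1 - D 0)$i$j" unfolding D0 D1 ev_sub by (rule ev_good[OF g1 facts])
  define d where "d s = (D s)$i$j" for s
  have "d 0 \<le> d s \<and> d s \<le> d (Suc s)"
  proof (rule seq_mono[where tau = tau])
    show "d (Suc (Suc s)) = tau * d (Suc s) - d s" for s
      unfolding d_def Drec by (simp add: mat_scal_entry)
    show "d 0 \<le> d 1" using p1 by (simp add: d_def)
    show "0 < d 0" using p0 by (simp add: d_def)
    show "2 \<le> tau" by (rule tau2)
  qed
  then have "0 < d s" using p0 d_def by force
  then show ?thesis by (simp add: d_def D_def Q_def K1_def K2_def aw_def)
qed

theorem lemma6p4:
  fixes A B :: mat2 and w :: word and s :: nat
  assumes "SL2_nonneg A" and "SL2_nonneg B"
    and "A ** B \<noteq> B ** A"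
    and "well_oriented A B"
    and "trace A < trace B"
    and "trace (A ** B) = trace (B ** B)"
    and "w = [] \<or> hd w = La"
  shows "(wtr A B (w @ [La, Lb, Lb, Lb, Lb] @ concat (replicate s [La, Lb, Lb]) @ [La, Lb, Lb, Lb])
           < wtr A B (w @ concat (replicate (s + 3) [La, Lb, Lb]))) \<and>
         (wtr A B (w @ [La, Lb, Lb, Lb] @ concat (replicate s [La, Lb, Lb]) @ [La, Lb, Lb, Lb, Lb])
           < wtr A B (w @ concat (replicate (s + 3) [La, Lb, Lb])))"
proof -
  note sA = assms(1) and sB = assms(2) and nc = assms(3)
  define x where "x = trace A"
  define t where "t = trace B"
  define z where "z = trace (A ** B)"
  have dB: "B$1$1*B$2$2 - B$1$2*B$2$1 = 1" using sB by (simp add: SL2_nonneg_def det2)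
  have "trace (B ** B) = t*t - 2"
    unfolding t_def tr2 mm_entries using dB by algebra
  then have ez: "z = t*t - 2" using assms(6) z_def by simp
  have x2: "2 \<le> x" unfolding x_def tr2 using sl_diag[OF sA] by linarith
  have xt: "x < t" using assms(5) x_def t_def by simp
  define p where "p = nat (x - 2)"
  define q where "q = nat (t - x - 1)"
  have ep: "x = int p + 2" using x2 p_def by simp
  have eq: "t = int p + int q + 3" using x2 xt p_def q_def by simp
  have W: "SL2_nonneg (phi A B w)" using phi_sl[OF sA sB] .
  have v1: "0 < (phi A B (concat (replicate (s+3) [La,Lb,Lb])) -
              phi A B [La, Lb, Lb, Lb, Lb] ** (phi A B (concat (replicate s [La,Lb,Lb])) ** phi A B [La, Lb, Lb, Lb]))$i$j" for i j
    by (rule variant[OF sA sB nc good_D0a[OF ep eq ez, unfolded x_def t_def z_def]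
          good_Ea[OF ep eq ez, unfolded x_def t_def z_def]]) (simp_all add: numeral_eq_Suc)
  have v2: "0 < (phi A B (concat (replicate (s+3) [La,Lb,Lb])) -
              phi A B [La, Lb, Lb, Lb] ** (phi A B (concat (replicate s [La,Lb,Lb])) ** phi A B [La, Lb, Lb, Lb, Lb]))$i$j" for i j
    by (rule variant[OF sA sB nc good_D0b[OF ep eq ez, unfolded x_def t_def z_def]
          good_Eb[OF ep eq ez, unfolded x_def t_def z_def]]) (simp_all add: numeral_eq_Suc)
  show ?thesis
    unfolding wtr_def phi_append
    using tr_pos[OF W] v1 v2 by blast
qed

end
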